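(* Let $N\geq2$ and $[\![N]\!]=\{1,\dots,N\}$. Let $x_1,\dots,x_N$ and $A_I$ ($I\subset[\![N]\!]$) be indeterminates, and let $K$ be the field of rational functions in them over $\mathbb{Q}$. For $k\in[\![N]\!]$ let $E_k$ be the map sending a tuple $(y_1,\dots,y_N)\in K^N$ with $y_k\neq0$ to $(y_1,\dots,y_{k-1},\overline{y_k},y_{k+1},\dots,y_N)$, where $$\overline{y_k}=\Big(\sum_{i\neq k}y_i^2+\sum_{I\subset[\![N]\!]\smallsetminus\{k\}}A_I\prod_{i\in I}y_i\Big)\Big/y_k .$$ Let $G$ be the group generated by the involutions $E_1,\dots,E_N$ acting (birationally) in this way. Then for every $g\in G$, each coordinate of $g\cdot(x_1,\dots,x_N)$ is a polynomial with integer coefficients in the variables $x_1^{\pm1},\dots,x_N^{\pm1}$ and $\{A_I\}_{I\subsetneq[\![N]\!]}$, the coefficients depending only on $g$.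
   Context: The maps $E_k$ are the birational involutions of $\mathbb{C}^N$ exchanging the two roots, in the $k$-th variable, of the Markoff-type equation $\sum_{i=1}^N X_i^2+\sum_{I\subset[\![N]\!]}A_I\prod_{i\in I}X_i=0$ (monic of degree $2$ in each variable); $G$ is the free product of $N$ copies of $\mathbb{Z}/2\mathbb{Z}$ acting through them. Note that $A_{[\![N]\!]}$ does not appear in the formula for any $E_k$. *)

theory Defs
  imports Complex_Main "HOL-Library.Poly_Mapping" "HOL-Library.List_Lexorder"
    "HOL-Library.Product_Lexorder" "HOL-Computational_Algebra.Fraction_Field"
begin

(* The pair/list encoding is only used so that the
   variable type is linearly ordered, which makes the polynomial ring an idom. *)
type_synonym var = "bool \<times> nat list"

definition xv :: "nat \<Rightarrow> var" where
  "xv i = (True, [i])"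

definition av :: "nat set \<Rightarrow> var" where
  "av I = (False, sorted_list_of_set I)"

type_synonym qpoly = "(var \<Rightarrow>\<^sub>0 nat) \<Rightarrow>\<^sub>0 rat"
type_synonym zpoly = "(var \<Rightarrow>\<^sub>0 nat) \<Rightarrow>\<^sub>0 int"

type_synonym K = "qpoly fract"

definition Var :: "var \<Rightarrow> K" where
  "Var v = Fract (Poly_Mapping.single (Poly_Mapping.single v 1) 1) 1"

definition zpoly_to_K :: "zpoly \<Rightarrow> K" where
  "zpoly_to_K P = Fract (Poly_Mapping.map (of_int :: int \<Rightarrow> rat) P) 1"

definition allowed_vars :: "nat \<Rightarrow> var set" where
  "allowed_vars N = xv ` {1..N} \<union> av ` {I. I \<subset> {1..N}}"

definition is_int_laurent :: "nat \<Rightarrow> K \<Rightarrow> bool" where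
  "is_int_laurent N c \<longleftrightarrow>
     (\<exists>(P :: zpoly) (m :: nat \<Rightarrow> nat).
        (\<forall>\<mu> \<in> Poly_Mapping.keys P. Poly_Mapping.keys \<mu> \<subseteq> allowed_vars N) \<and>
        c = zpoly_to_K P / (\<Prod>i\<in>{1..N}. Var (xv i) ^ m i))"

definition E :: "nat \<Rightarrow> nat \<Rightarrow> (nat \<Rightarrow> K) \<Rightarrow> (nat \<Rightarrow> K)" where
  "E N k y = y(k := ((\<Sum>i\<in>{1..N} - {k}. y i ^ 2)
                    + (\<Sum>I\<in>Pow ({1..N} - {k}). Var (av I) * (\<Prod>i\<in>I. y i))) / y k)"

definition act :: "nat \<Rightarrow> nat list \<Rightarrow> (nat \<Rightarrow> K) \<Rightarrow> (nat \<Rightarrow> K)" where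
  "act N ks y = foldr (E N) ks y"

definition generic_point :: "nat \<Rightarrow> K" where
  "generic_point i = Var (xv i)"

end

theory Submission imports Defs begin

lemma lookup_map_of_int: "Poly_Mapping.lookup (Poly_Mapping.map (of_int :: int \<Rightarrow> rat) r) k = of_int (Poly_Mapping.lookup r k)"
  by transfer (auto simp: when_def)

lemma of_int_Sum_any: "(of_int (Sum_any g) :: rat) = Sum_any (\<lambda>a. of_int (g a))"
proof -
  have "{a. (of_int (g a)::rat) \<noteq> 0} = {a. g a \<noteq> 0}" by simp
  then show ?thesis by (simp add: Sum_any.expand_set)
qed

lemma map_of_int_mult:
  "Poly_Mapping.map (of_int :: int \<Rightarrow> rat) (p * q) = Poly_Mapping.map of_int p * Poly_Mapping.map of_int (q :: 'a::comm_monoid_add \<Rightarrow>\<^sub>0 int)"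
  apply (rule poly_mapping_eqI)
  apply (simp only: lookup_map_of_int lookup_mult)
  apply (simp add: of_int_Sum_any when_def if_distrib cong: if_cong)
  done

lemma map_of_int_add:
  "Poly_Mapping.map (of_int :: int \<Rightarrow> rat) (p + q) = Poly_Mapping.map of_int p + Poly_Mapping.map of_int (q :: 'a \<Rightarrow>\<^sub>0 int)"
  by transfer (auto simp: when_def fun_eq_iff)

lemma map_of_int_uminus:
  "Poly_Mapping.map (of_int :: int \<Rightarrow> rat) (- p) = - Poly_Mapping.map of_int (p :: 'a \<Rightarrow>\<^sub>0 int)"
  by transfer (auto simp: when_def fun_eq_iff)

lemma map_of_int_one:
  "Poly_Mapping.map (of_int :: int \<Rightarrow> rat) (1 :: ('a::comm_monoid_add) \<Rightarrow>\<^sub>0 int) = 1"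
  by transfer (auto simp: when_def fun_eq_iff)

lemma zK_add: "zpoly_to_K (p + q) = zpoly_to_K p + zpoly_to_K q"
  by (simp add: zpoly_to_K_def map_of_int_add)

lemma zK_mult: "zpoly_to_K (p * q) = zpoly_to_K p * zpoly_to_K q"
  by (simp add: zpoly_to_K_def map_of_int_mult)

lemma zK_uminus: "zpoly_to_K (- p) = - zpoly_to_K p"
  by (simp add: zpoly_to_K_def map_of_int_uminus)

lemma zK_one: "zpoly_to_K 1 = 1"
  by (simp add: zpoly_to_K_def map_of_int_one One_fract_def)

lemma zK_prod: "zpoly_to_K (prod f A) = (\<Prod>x\<in>A. zpoly_to_K (f x))"
  by (induction A rule: infinite_finite_induct) (auto simp: zK_one zK_mult)

lemma zK_power: "zpoly_to_K (p ^ n) = zpoly_to_K p ^ n"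
  by (induction n) (auto simp: zK_one zK_mult)

definition mono :: "var \<Rightarrow> zpoly" where
  "mono v = Poly_Mapping.single (Poly_Mapping.single v 1) 1"

lemma zK_mono: "zpoly_to_K (mono v) = Var v"
  by (simp add: zpoly_to_K_def mono_def Var_def)

lemma Var_nonzero: "Var v \<noteq> 0"
proof -
  have "Poly_Mapping.single (Poly_Mapping.single v (1::nat)) (1::rat) \<noteq> 0"
    by (metis lookup_single_eq lookup_zero zero_neq_one)
  then show ?thesis by (simp add: Var_def Zero_fract_def eq_fract)
qed

definition AP :: "nat \<Rightarrow> zpoly set" where
  "AP N = {P. \<forall>\<mu> \<in> Poly_Mapping.keys P. Poly_Mapping.keys \<mu> \<subseteq> allowed_vars N}"

lemma AP_add: "p \<in> AP N \<Longrightarrow> q \<in> AP N \<Longrightarrow> p + q \<in> AP N"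
  unfolding AP_def using keys_add[of p q] by (simp add: subset_iff) blast

lemma keys_uminus': "Poly_Mapping.keys (- (p :: 'a \<Rightarrow>\<^sub>0 'b::ab_group_add)) = Poly_Mapping.keys p"
  by transfer simp

lemma AP_uminus: "p \<in> AP N \<Longrightarrow> - p \<in> AP N"
  unfolding AP_def by (simp add: keys_uminus')

lemma AP_one: "1 \<in> AP N"
  unfolding AP_def by simp

lemma AP_mult: "p \<in> AP N \<Longrightarrow> q \<in> AP N \<Longrightarrow> p * q \<in> AP N"
  unfolding AP_def
proof (intro CollectI ballI)
  fix \<mu> assume p: "p \<in> {P. \<forall>\<mu>\<in>Poly_Mapping.keys P. Poly_Mapping.keys \<mu> \<subseteq> allowed_vars N}"
    and q: "q \<in> {P. \<forall>\<mu>\<in>Poly_Mapping.keys P. Poly_Mapping.keys \<mu> \<subseteq> allowed_vars N}" and m: "\<mu> \<in> Poly_Mapping.keys (p * q)"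
  then obtain a b where "\<mu> = a + b" "a \<in> Poly_Mapping.keys p" "b \<in> Poly_Mapping.keys q" using keys_mult by blast
  then show "Poly_Mapping.keys \<mu> \<subseteq> allowed_vars N" using p q keys_add[of a b] by blast
qed

lemma AP_prod: "(\<And>x. x \<in> A \<Longrightarrow> f x \<in> AP N) \<Longrightarrow> prod f A \<in> AP N"
  by (induction A rule: infinite_finite_induct) (auto simp: AP_one AP_mult)

lemma AP_power: "p \<in> AP N \<Longrightarrow> p ^ n \<in> AP N"
  by (induction n) (auto simp: AP_one AP_mult)

lemma AP_mono: "v \<in> allowed_vars N \<Longrightarrow> mono v \<in> AP N"
  unfolding AP_def mono_def by simp

definition Den :: "nat \<Rightarrow> (nat \<Rightarrow> nat) \<Rightarrow> K" where
  "Den N m = (\<Prod>i\<in>{1..N}. Var (xv i) ^ m i)"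

lemma Den_nonzero: "Den N m \<noteq> 0"
  unfolding Den_def by (simp add: Var_nonzero)

lemma Den_add: "Den N (\<lambda>i. m1 i + m2 i) = Den N m1 * Den N m2"
  unfolding Den_def by (simp add: power_add prod.distrib)

lemma Den_zpoly: "\<exists>Q \<in> AP N. Den N m = zpoly_to_K Q"
proof
  show "(\<Prod>i\<in>{1..N}. mono (xv i) ^ m i) \<in> AP N"
    by (intro AP_prod AP_power AP_mono) (auto simp: allowed_vars_def)
  show "Den N m = zpoly_to_K (\<Prod>i\<in>{1..N}. mono (xv i) ^ m i)"
    by (simp add: Den_def zK_prod zK_power zK_mono)
qed

lemma is_int_laurent_iff: "is_int_laurent N c \<longleftrightarrow> (\<exists>P \<in> AP N. \<exists>m. c = zpoly_to_K P / Den N m)"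
  unfolding is_int_laurent_def AP_def Den_def by blast

lemma L_poly: "P \<in> AP N \<Longrightarrow> is_int_laurent N (zpoly_to_K P)"
  unfolding is_int_laurent_iff
  by (rule bexI[of _ P]) (auto intro: exI[of _ "\<lambda>_. 0"] simp: Den_def)

lemma L_add:
  assumes "is_int_laurent N c1" "is_int_laurent N c2"
  shows "is_int_laurent N (c1 + c2)"
proof -
  obtain P1 m1 where P1: "P1 \<in> AP N" "c1 = zpoly_to_K P1 / Den N m1"
    using assms(1) unfolding is_int_laurent_iff by blast
  obtain P2 m2 where P2: "P2 \<in> AP N" "c2 = zpoly_to_K P2 / Den N m2"
    using assms(2) unfolding is_int_laurent_iff by blast
  obtain Q1 where Q1: "Q1 \<in> AP N" "Den N m1 = zpoly_to_K Q1" using Den_zpoly by blast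
  obtain Q2 where Q2: "Q2 \<in> AP N" "Den N m2 = zpoly_to_K Q2" using Den_zpoly by blast
  have "c1 + c2 = (zpoly_to_K P1 * Den N m2 + zpoly_to_K P2 * Den N m1) / (Den N m1 * Den N m2)"
    using P1 P2 by (simp add: add_frac_eq Den_nonzero)
  also have "\<dots> = zpoly_to_K (P1 * Q2 + P2 * Q1) / Den N (\<lambda>i. m1 i + m2 i)"
    by (simp add: Q1 Q2 zK_add zK_mult Den_add)
  finally show ?thesis unfolding is_int_laurent_iff
    using P1 P2 Q1 Q2 by (blast intro: AP_add AP_mult)
qed

lemma L_mult:
  assumes "is_int_laurent N c1" "is_int_laurent N c2"
  shows "is_int_laurent N (c1 * c2)"
proof -
  obtain P1 m1 where P1: "P1 \<in> AP N" "c1 = zpoly_to_K P1 / Den N m1"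
    using assms(1) unfolding is_int_laurent_iff by blast
  obtain P2 m2 where P2: "P2 \<in> AP N" "c2 = zpoly_to_K P2 / Den N m2"
    using assms(2) unfolding is_int_laurent_iff by blast
  have "c1 * c2 = zpoly_to_K (P1 * P2) / Den N (\<lambda>i. m1 i + m2 i)"
    using P1 P2 by (simp add: zK_mult Den_add)
  then show ?thesis unfolding is_int_laurent_iff
    using P1 P2 by (blast intro: AP_mult)
qed

lemma L_uminus:
  assumes "is_int_laurent N c"
  shows "is_int_laurent N (- c)"
proof -
  obtain P m where P: "P \<in> AP N" "c = zpoly_to_K P / Den N m"
    using assms unfolding is_int_laurent_iff by blast
  have "- c = zpoly_to_K (- P) / Den N m" using P by (simp add: zK_uminus)
  then show ?thesis unfolding is_int_laurent_iff using P by (blast intro: AP_uminus)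
qed

lemma L_divDen:
  assumes "is_int_laurent N c"
  shows "is_int_laurent N (c / Den N m2)"
proof -
  obtain P m where P: "P \<in> AP N" "c = zpoly_to_K P / Den N m"
    using assms unfolding is_int_laurent_iff by blast
  have "c / Den N m2 = zpoly_to_K P / Den N (\<lambda>i. m i + m2 i)" using P by (simp add: Den_add)
  then show ?thesis unfolding is_int_laurent_iff using P by blast
qed

lemma L_one: "is_int_laurent N 1"
  using L_poly[OF AP_one] by (simp add: zK_one)

lemma L_zero: "is_int_laurent N 0"
  using L_add[OF L_one L_uminus[OF L_one], of N] by simp

lemma L_sum: "(\<And>x. x \<in> A \<Longrightarrow> is_int_laurent N (f x)) \<Longrightarrow> is_int_laurent N (sum f A)"
  by (induction A rule: infinite_finite_induct) (auto simp: L_zero L_add)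

lemma L_prod: "(\<And>x. x \<in> A \<Longrightarrow> is_int_laurent N (f x)) \<Longrightarrow> is_int_laurent N (prod f A)"
  by (induction A rule: infinite_finite_induct) (auto simp: L_one L_mult)

lemma L_power: "is_int_laurent N c \<Longrightarrow> is_int_laurent N (c ^ n)"
  by (induction n) (auto simp: L_one L_mult)

lemma L_Var: "v \<in> allowed_vars N \<Longrightarrow> is_int_laurent N (Var v)"
  using L_poly[OF AP_mono] zK_mono by metis

lemma L_x: "i \<in> {1..N} \<Longrightarrow> is_int_laurent N (Var (xv i))"
  by (rule L_Var) (auto simp: allowed_vars_def)

lemma L_A: "I \<subset> {1..N} \<Longrightarrow> is_int_laurent N (Var (av I))"
  by (rule L_Var) (auto simp: allowed_vars_def)

section \<open>The surface and the invariant\<close>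

definition S0 :: "nat \<Rightarrow> K" where
  "S0 N = (\<Sum>i\<in>{1..N}. Var (xv i) ^ 2)
        + (\<Sum>I\<in>Pow {1..N} - {{1..N}}. Var (av I) * (\<Prod>i\<in>I. Var (xv i)))"

definition aN :: "nat \<Rightarrow> K" where
  "aN N = - S0 N / Den N (\<lambda>_. 1)"

definition F :: "nat \<Rightarrow> (nat \<Rightarrow> K) \<Rightarrow> K" where
  "F N y = (\<Sum>i\<in>{1..N}. y i ^ 2)
        + (\<Sum>I\<in>Pow {1..N} - {{1..N}}. Var (av I) * (\<Prod>i\<in>I. y i))
        + aN N * (\<Prod>i\<in>{1..N}. y i)"

definition Lk :: "nat \<Rightarrow> nat \<Rightarrow> (nat \<Rightarrow> K) \<Rightarrow> K" where
  "Lk N k y = (\<Sum>I\<in>{I\<in>Pow {1..N}. k \<in> I \<and> I \<noteq> {1..N}}. Var (av I) * (\<Prod>i\<in>I - {k}. y i))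
        + aN N * (\<Prod>i\<in>{1..N} - {k}. y i)"

definition C :: "nat \<Rightarrow> nat \<Rightarrow> (nat \<Rightarrow> K) \<Rightarrow> K" where
  "C N k y = (\<Sum>i\<in>{1..N} - {k}. y i ^ 2)
                    + (\<Sum>I\<in>Pow ({1..N} - {k}). Var (av I) * (\<Prod>i\<in>I. y i))"

lemma E_C: "E N k y = y(k := C N k y / y k)"
  by (simp add: E_def C_def)

lemma L_S0: "is_int_laurent N (S0 N)"
  unfolding S0_def
  by (intro L_add L_sum L_mult L_power L_prod L_x L_A) auto

lemma L_aN: "is_int_laurent N (aN N)"
  unfolding aN_def by (intro L_divDen L_uminus L_S0)

lemma F_generic: "F N generic_point = 0"
proof -
  have D: "(\<Prod>i\<in>{1..N}. Var (xv i)) = Den N (\<lambda>_. 1)" by (simp add: Den_def)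
  have "F N generic_point = S0 N + aN N * Den N (\<lambda>_. 1)"
    unfolding F_def S0_def generic_point_def D by simp
  also have "\<dots> = 0" unfolding aN_def using Den_nonzero[of N "\<lambda>_. 1"] by simp
  finally show ?thesis .
qed

lemma F_decomp:
  assumes k: "k \<in> {1..N}"
  shows "F N y = y k ^ 2 + Lk N k y * y k + C N k y"
proof -
  have s1: "(\<Sum>i\<in>{1..N}. y i ^ 2) = y k ^ 2 + (\<Sum>i\<in>{1..N} - {k}. y i ^ 2)"
    using k by (simp add: sum.remove)
  have p1: "(\<Prod>i\<in>{1..N}. y i) = y k * (\<Prod>i\<in>{1..N} - {k}. y i)"
    using k by (simp add: prod.remove)
  define A1 where "A1 = Pow ({1..N} - {k})"
  define A2 where "A2 = {I\<in>Pow {1..N}. k \<in> I \<and> I \<noteq> {1..N}}"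
  have U: "Pow {1..N} - {{1..N}} = A1 \<union> A2" using k unfolding A1_def A2_def by auto
  have D: "A1 \<inter> A2 = {}" unfolding A1_def A2_def by auto
  have fin: "finite A1" "finite A2" unfolding A1_def A2_def by auto
  have s2: "(\<Sum>I\<in>Pow {1..N} - {{1..N}}. Var (av I) * (\<Prod>i\<in>I. y i))
     = (\<Sum>I\<in>A1. Var (av I) * (\<Prod>i\<in>I. y i)) + (\<Sum>I\<in>A2. Var (av I) * (\<Prod>i\<in>I. y i))"
    unfolding U using fin D by (simp add: sum.union_disjoint)
  have s3: "(\<Sum>I\<in>A2. Var (av I) * (\<Prod>i\<in>I. y i)) = (\<Sum>I\<in>A2. Var (av I) * (\<Prod>i\<in>I - {k}. y i)) * y k"
    unfolding sum_distrib_right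
  proof (rule sum.cong)
    fix I assume "I \<in> A2"
    then have "finite I" "k \<in> I" unfolding A2_def by (auto intro: finite_subset)
    then show "Var (av I) * (\<Prod>i\<in>I. y i) = Var (av I) * (\<Prod>i\<in>I - {k}. y i) * y k"
      by (simp add: prod.remove mult_ac)
  qed simp
  show ?thesis
    unfolding F_def s1 p1 s2 s3 Lk_def C_def A2_def[symmetric] A1_def[symmetric]
    by (simp add: algebra_simps power2_eq_square)
qed

lemma Lk_upd: "Lk N k (y(k := v)) = Lk N k y"
  unfolding Lk_def by (intro arg_cong2[where f="(+)"] sum.cong arg_cong2[where f="(*)"] prod.cong refl) auto

lemma C_upd: "C N k (y(k := v)) = C N k y"
  unfolding C_def by (intro arg_cong2[where f="(+)"] sum.cong arg_cong2[where f="(*)"] prod.cong refl) auto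

lemma L_Lk:
  assumes "\<forall>i\<in>{1..N}. is_int_laurent N (y i)"
  shows "is_int_laurent N (Lk N k y)"
  unfolding Lk_def using assms
  by (intro L_add L_sum L_mult L_prod L_A L_aN) auto

lemma step:
  assumes k: "k \<in> {1..N}" and F0: "F N y = 0" and L: "\<forall>i\<in>{1..N}. is_int_laurent N (y i)"
  shows "F N (E N k y) = 0 \<and> (\<forall>i\<in>{1..N}. is_int_laurent N (E N k y i))"
proof (cases "y k = 0")
  case True
  then have "E N k y = y" unfolding E_C by (simp add: fun_upd_idem)
  then show ?thesis using F0 L by simp
next
  case False
  define l where "l = Lk N k y"
  define c where "c = C N k y"
  have eq: "y k ^ 2 + l * y k + c = 0" using F0 F_decomp[OF k, of y] unfolding l_def c_def by simp
  have v: "c / y k = - y k - l"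
    using eq False by (simp add: field_simps power2_eq_square) (metis add.commute add_eq_0_iff2 add.left_commute)
  have Ey: "E N k y = y(k := - y k - l)" using v by (simp add: E_C c_def)
  have "F N (E N k y) = (- y k - l) ^ 2 + l * (- y k - l) + c"
    unfolding Ey F_decomp[OF k] by (simp add: Lk_upd C_upd l_def c_def)
  also have "\<dots> = y k ^ 2 + l * y k + c" by (simp add: algebra_simps power2_eq_square)
  finally have "F N (E N k y) = 0" using eq by simp
  moreover have "is_int_laurent N (- y k - l)"
    using L k L_Lk[OF L, of k] unfolding l_def diff_conv_add_uminus
    by (intro L_add L_uminus) auto
  ultimately show ?thesis using L by (simp add: Ey)
qed

theorem proposition11:
  fixes N :: nat and ks :: "nat list"
  assumes "N \<ge> 2" and "set ks \<subseteq> {1..N}"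
  shows "\<forall>j\<in>{1..N}. is_int_laurent N (act N ks generic_point j)"
proof -
  have "F N (act N ks generic_point) = 0 \<and> (\<forall>j\<in>{1..N}. is_int_laurent N (act N ks generic_point j))"
    using assms(2)
  proof (induction ks)
    case Nil
    have "act N [] generic_point = generic_point" by (simp add: act_def)
    then show ?case using F_generic L_x unfolding generic_point_def by simp
  next
    case (Cons k ks)
    then have k: "k \<in> {1..N}" and IH: "F N (act N ks generic_point) = 0 \<and> (\<forall>j\<in>{1..N}. is_int_laurent N (act N ks generic_point j))"
      by auto
    have "act N (k # ks) generic_point = E N k (act N ks generic_point)" by (simp add: act_def)
    then show ?case using step[OF k] IH by simp
  qed
  then show ?thesis by blast
qed

end
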